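(* Let $g\ge0$, $n\ge1$ with $2-2g-n<0$, and let $\Gamma$ be a trivalent ribbon graph of type $(g,n)$ with edges labelled $1,\dots,6g-6+3n$. Then the oriented adjacency matrix $B$ of $\Gamma$ (a $(6g-6+3n)\times(6g-6+3n)$ skew-symmetric integer matrix) has rank $6g-6+2n$.
   Context: A ribbon graph of type $(g,n)$ is a finite connected graph (loops and multiple edges allowed), all vertices of degree $\ge3$, with a cyclic ordering of the half-edges at each vertex, whose thickening according to these cyclic orderings is an oriented surface of genus $g$ with $n$ boundary components (faces); it is trivalent if all vertices have degree $3$, in which case it has $6g-6+3n$ edges. Let $H$ be the set of half-edges, $s_0:H\to H$ the permutation sending a half-edge to the next half-edge at the same vertex in the (anticlockwise) cyclic order, and $e(h)$ the edge containing $h$. The oriented adjacency matrix is defined by \[B_{ij}=\sum_{h\in H,\ e(h)=i}\Big([e(s_0h)=j]-[e(s_0^{-1}h)=j]\Big),\] where $[\cdot]$ is $1$ if the condition holds and $0$ otherwise; thus $B_{ij}=0$ if edges $i,j$ are not adjacent or $i=j$, and otherwise $B_{ij}$ counts, with signs $\pm1$ determined by the cyclic order, the vertices at which edge $j$ follows or precedes edge $i$ (the paper fixes this sign convention by a diagram; the opposite overall sign gives the same rank). *)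

theory Defs
  imports "HOL-Analysis.Analysis"
begin

text \<open>Half-edges form a finite type 'h, edges a finite
  type 'e. The map e sends a half-edge to its edge (every edge has exactly two
  half-edges), and s0 is the permutation of half-edges giving the next half-edge
  at the same vertex in the cyclic order.\<close>

definition perm_orbit :: "('h \<Rightarrow> 'h) \<Rightarrow> 'h \<Rightarrow> 'h set" where
  "perm_orbit f h = {(f ^^ k) h | k. True}"

definition num_orbits :: "('h \<Rightarrow> 'h) \<Rightarrow> nat" where
  "num_orbits f = card (range (perm_orbit f))"

definition other_half :: "('h \<Rightarrow> 'e) \<Rightarrow> 'h \<Rightarrow> 'h" where
  "other_half e h = (THE h'. h' \<noteq> h \<and> e h' = e h)"

text \<open>Vertices are s0-orbits, edges are the edge labels, faces (boundary components
  of the thickening) are the orbits of s0 composed with s1.\<close>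
definition num_vertices :: "('h \<Rightarrow> 'h) \<Rightarrow> nat" where
  "num_vertices s0 = num_orbits s0"

definition num_faces :: "('h \<Rightarrow> 'h) \<Rightarrow> ('h \<Rightarrow> 'e) \<Rightarrow> nat" where
  "num_faces s0 e = num_orbits (s0 \<circ> other_half e)"

definition ribbon_graph :: "('h::finite \<Rightarrow> 'h) \<Rightarrow> ('h \<Rightarrow> 'e::finite) \<Rightarrow> bool" where
  "ribbon_graph s0 e \<longleftrightarrow>
     bij s0 \<and>
     (\<forall>x. card (e -` {x}) = 2) \<and>
     (\<forall>h. card (perm_orbit s0 h) \<ge> 3) \<and>
     (\<forall>h h'. (h, h') \<in> ({(a, s0 a) | a. True} \<union> {(a, b). e a = e b})\<^sup>*)"

definition trivalent_ribbon_graph :: "('h::finite \<Rightarrow> 'h) \<Rightarrow> ('h \<Rightarrow> 'e::finite) \<Rightarrow> bool" where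
  "trivalent_ribbon_graph s0 e \<longleftrightarrow> ribbon_graph s0 e \<and> (\<forall>h. card (perm_orbit s0 h) = 3)"

definition ribbon_type :: "('h::finite \<Rightarrow> 'h) \<Rightarrow> ('h \<Rightarrow> 'e::finite) \<Rightarrow> nat \<Rightarrow> nat \<Rightarrow> bool" where
  "ribbon_type s0 e g n \<longleftrightarrow>
     num_faces s0 e = n \<and>
     int (num_vertices s0) - int CARD('e) + int (num_faces s0 e) = 2 - 2 * int g"

definition oriented_adjacency :: "('h::finite \<Rightarrow> 'h) \<Rightarrow> ('h \<Rightarrow> 'e::finite) \<Rightarrow> rat ^ 'e ^ 'e" where
  "oriented_adjacency s0 e = (\<chi> i j. of_int (\<Sum>h\<in>{h. e h = i}.
      (if e (s0 h) = j then 1 else 0) - (if e (inv s0 h) = j then 1 else 0)))"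

end

theory Submission
  imports Defs
begin
lemma fin_nilpotent:
  fixes f :: "'h::finite \<Rightarrow> 'h" assumes "bij f" shows "\<exists>N>0. f ^^ N = id"
proof -
  have "\<not> inj (\<lambda>k::nat. f ^^ k)"
  proof
    assume "inj (\<lambda>k::nat. f ^^ k)"
    then have "infinite (range (\<lambda>k::nat. f ^^ k))"
      using finite_imageD infinite_UNIV_nat by blast
    then show False by simp
  qed
  then obtain i j where ij: "i \<noteq> j" "f ^^ i = f ^^ j" unfolding inj_def by auto
  have gen: "f ^^ (b - a) = id" if "a < b" "f ^^ a = f ^^ b" for a b
  proof -
    have "f ^^ a \<circ> f ^^ (b - a) = f ^^ (a + (b - a))" by (simp add: funpow_add)
    also have "a + (b - a) = b" using that by simp
    finally have c: "f ^^ a \<circ> f ^^ (b - a) = f ^^ a" by (simp only: that(2))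
    have injf: "inj (f ^^ a)" using assms bij_is_inj inj_fn by auto
    have "(f ^^ (b - a)) y = y" for y
      using fun_cong[OF c, of y] injf by (simp add: inj_eq)
    then show ?thesis by auto
  qed
  show ?thesis
  proof (cases "i < j")
    case True then show ?thesis using gen[of i j] ij by (intro exI[of _ "j - i"]) auto
  next
    case False then have "j < i" using ij by auto
    then show ?thesis using gen[of j i] ij by (intro exI[of _ "i - j"]) auto
  qed
qed

lemma po_funpow: "(f ^^ k) x \<in> perm_orbit f x"
  unfolding perm_orbit_def by blast

lemma po_self: "x \<in> perm_orbit f x"
  using po_funpow[of 0] by simp

lemma po_step: "f x \<in> perm_orbit f x"
  using po_funpow[of 1] by simp

lemma po_sub: assumes "y \<in> perm_orbit f x" shows "perm_orbit f y \<subseteq> perm_orbit f x"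
proof
  fix z assume "z \<in> perm_orbit f y"
  then obtain k where z: "z = (f ^^ k) y" unfolding perm_orbit_def by blast
  obtain j where y: "y = (f ^^ j) x" using assms unfolding perm_orbit_def by blast
  have "z = (f ^^ (k + j)) x" by (simp add: z y funpow_add)
  then show "z \<in> perm_orbit f x" using po_funpow by metis
qed

lemma po_sym:
  fixes f :: "'h::finite \<Rightarrow> 'h" assumes "bij f" "y \<in> perm_orbit f x" shows "x \<in> perm_orbit f y"
proof -
  obtain N where N: "N > 0" "f ^^ N = id" using fin_nilpotent[OF assms(1)] by blast
  obtain j where y: "y = (f ^^ j) x" using assms unfolding perm_orbit_def by blast
  have "(f ^^ (N * j - j)) y = (f ^^ (N * j - j + j)) x" by (simp add: y funpow_add)
  also have "N * j - j + j = N * j" using N(1) by (simp add: Suc_le_eq)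
  also have "f ^^ (N * j) = (f ^^ N) ^^ j" by (simp add: funpow_mult)
  also have "\<dots> = id" using N(2) by simp
  finally have "(f ^^ (N * j - j)) y = x" by simp
  then show ?thesis using po_funpow[of "N * j - j" f y] by simp
qed

lemma po_eq:
  fixes f :: "'h::finite \<Rightarrow> 'h" assumes "bij f" "y \<in> perm_orbit f x"
  shows "perm_orbit f y = perm_orbit f x"
  using po_sub[OF assms(2)] po_sub[OF po_sym[OF assms]] by (rule antisym)

lemma po_partition:
  fixes f :: "'h::finite \<Rightarrow> 'h" assumes "bij f" "\<And>h. card (perm_orbit f h) = k"
  shows "k * card (range (perm_orbit f)) = CARD('h)"
proof -
  have "x \<in> \<Union> (range (perm_orbit f))" for x by (rule UnionI[OF rangeI[of "perm_orbit f" x] po_self])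
  then have U: "\<Union> (range (perm_orbit f)) = UNIV" by auto
  have "k * card (range (perm_orbit f)) = card (\<Union> (range (perm_orbit f)))"
  proof (rule card_partition)
    fix c assume "c \<in> range (perm_orbit f)" then show "card c = k" using assms(2) by auto
  next
    fix c1 c2 assume c: "c1 \<in> range (perm_orbit f)" "c2 \<in> range (perm_orbit f)" "c1 \<noteq> c2"
    then obtain a b where ab: "c1 = perm_orbit f a" "c2 = perm_orbit f b" by auto
    show "c1 \<inter> c2 = {}"
    proof (rule ccontr)
      assume "c1 \<inter> c2 \<noteq> {}"
      then obtain z where "z \<in> perm_orbit f a" "z \<in> perm_orbit f b" using ab by auto
      then have "perm_orbit f z = c1" "perm_orbit f z = c2" using po_eq[OF assms(1), of z a] po_eq[OF assms(1), of z b] ab by simp_all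
      then show False using c(3) by simp
    qed
  qed simp_all
  then show ?thesis using U by simp
qed

lemma funpow_mod:
  assumes "(f ^^ d) x = x" shows "(f ^^ k) x = (f ^^ (k mod d)) x"
proof -
  have pw: "(f ^^ (d * q)) x = x" for q
  proof (induction q)
    case 0 then show ?case by simp
  next
    case (Suc q)
    have "(f ^^ (d * Suc q)) x = (f ^^ d) ((f ^^ (d * q)) x)"
      by (simp only: mult_Suc_right funpow_add o_apply)
    then show ?case using Suc assms by simp
  qed
  have "(f ^^ k) x = (f ^^ (k mod d + d * (k div d))) x" by simp
  also have "\<dots> = (f ^^ (k mod d)) ((f ^^ (d * (k div d))) x)" by (simp only: funpow_add o_apply)
  also have "\<dots> = (f ^^ (k mod d)) x" by (simp only: pw)
  finally show ?thesis .
qed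

lemma po_period:
  assumes "(f ^^ d) x = x" "d > 0" shows "perm_orbit f x \<subseteq> (\<lambda>k. (f ^^ k) x) ` {..<d}"
proof
  fix z assume "z \<in> perm_orbit f x"
  then obtain k where z: "z = (f ^^ k) x" unfolding perm_orbit_def by blast
  then have "z = (f ^^ (k mod d)) x" using funpow_mod[OF assms(1)] by simp
  moreover have "k mod d < d" using assms(2) by simp
  ultimately show "z \<in> (\<lambda>k. (f ^^ k) x) ` {..<d}" by blast
qed

lemma cube_of_card3:
  fixes f :: "'h::finite \<Rightarrow> 'h" assumes "bij f" "card (perm_orbit f x) = 3"
  shows "f (f (f x)) = x"
proof -
  let ?g = "\<lambda>k. (f ^^ k) x"
  have sub: "?g ` {..3} \<subseteq> perm_orbit f x" by (auto intro: po_funpow)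
  have "\<not> inj_on ?g {..3}"
  proof
    assume "inj_on ?g {..3}"
    then have "card (?g ` {..3}) = 4" by (simp add: card_image)
    moreover have "card (?g ` {..3}) \<le> 3" using card_mono[OF _ sub] assms(2) by simp
    ultimately show False by simp
  qed
  then obtain i j where ij: "i \<le> 3" "j \<le> 3" "i < j" "?g i = ?g j"
    unfolding inj_on_def by (metis atMost_iff linorder_neqE_nat)
  have injf: "inj (f ^^ i)" using assms(1) bij_is_inj inj_fn by blast
  have jj: "j = i + (j - i)" using ij by simp
  have "(f ^^ i) ((f ^^ (j - i)) x) = (f ^^ j) x"
    by (subst (2) jj) (simp add: funpow_add)
  also have "\<dots> = (f ^^ i) x" using ij(4) by simp
  finally have "(f ^^ i) ((f ^^ (j - i)) x) = (f ^^ i) x" .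
  then have d: "(f ^^ (j - i)) x = x" using injf by (simp add: inj_eq)
  consider "j - i = 1" | "j - i = 2" | "j - i = 3" using ij by linarith
  then show ?thesis
  proof cases
    case 3 then show ?thesis using d by (simp add: numeral_eq_Suc)
  next
    case 1
    have "card (perm_orbit f x) \<le> card ((\<lambda>k. (f ^^ k) x) ` {..<1})"
      using po_period[of "j - i" f x] d 1 by (intro card_mono) auto
    also have "\<dots> \<le> 1" by (metis card_image_le card_lessThan finite_lessThan)
    finally show ?thesis using assms(2) by simp
  next
    case 2
    have "card (perm_orbit f x) \<le> card ((\<lambda>k. (f ^^ k) x) ` {..<2})"
      using po_period[of "j - i" f x] d 2 by (intro card_mono) auto
    also have "\<dots> \<le> 2" by (metis card_image_le card_lessThan finite_lessThan)
    finally show ?thesis using assms(2) by simp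
  qed
qed

lemma rank_nullity_vec:
  fixes f :: "'a::field^'n \<Rightarrow> 'a^'m"
  assumes lf: "Vector_Spaces.linear (*s) (*s) f"
  shows "vec.dim (range f) + vec.dim {x. f x = 0} = CARD('n)"
proof -
  interpret lf: Vector_Spaces.linear "(*s)" "(*s)" f by (rule lf)
  let ?K0 = "{x. f x = 0}"
  obtain K where K: "K \<subseteq> ?K0" "vec.independent K" "?K0 \<subseteq> vec.span K" "card K = vec.dim ?K0"
    by (rule vec.basis_exists[of ?K0])
  obtain B where B: "K \<subseteq> B" "vec.independent B" "UNIV \<subseteq> vec.span B"
    using vec.maximal_independent_subset_extend[of K UNIV, OF _ K(2)] by auto
  have finB: "finite B" using vec.finiteI_independent[OF B(2)] .
  have cardB: "card B = CARD('n)"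
    using vec.basis_card_eq_dim[of B UNIV] B vec.dim_UNIV card_cart_basis by auto
  define C where "C = B - K"
  have finC: "finite C" using finB C_def by auto
  have cardC: "card C = card B - card K" unfolding C_def using finB B(1)
    by (simp add: card_Diff_subset finite_subset)
  have indC: "vec.independent C" using vec.independent_mono[OF B(2)] C_def by auto
  have disj: "w = 0" if w1: "w \<in> vec.span C" and w2: "w \<in> vec.span K" for w
  proof -
    have finK: "finite K" using finB B(1) finite_subset by blast
    obtain a where a: "w = (\<Sum>v\<in>C. a v *s v)" using w1 vec.span_finite[OF finC] by auto
    obtain b where b: "w = (\<Sum>v\<in>K. b v *s v)" using w2 vec.span_finite[OF finK] by auto
    define d where "d v = (if v \<in> C then a v else - b v)" for v
    have BCK: "B = C \<union> K" "C \<inter> K = {}" using B(1) C_def by auto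
    have "(\<Sum>v\<in>B. d v *s v) = (\<Sum>v\<in>C. d v *s v) + (\<Sum>v\<in>K. d v *s v)"
      unfolding BCK(1) by (rule sum.union_disjoint[OF finC finK BCK(2)])
    also have "(\<Sum>v\<in>C. d v *s v) = w" unfolding a d_def by simp
    also have "(\<Sum>v\<in>K. d v *s v) = - w" unfolding b d_def using BCK(2)
      by (auto simp: sum_negf[symmetric] intro!: sum.cong)
    finally have "(\<Sum>v\<in>B. d v *s v) = 0" by simp
    then have "\<forall>v\<in>B. d v = 0" using B(2) unfolding vec.independent_explicit by auto
    then have "\<forall>v\<in>C. a v = 0" unfolding d_def C_def by auto
    then show ?thesis unfolding a by simp
  qed
  have inj: "inj_on f (vec.span C)"
  proof (rule inj_onI)
    fix u v assume uv: "u \<in> vec.span C" "v \<in> vec.span C" "f u = f v"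
    then have "u - v \<in> vec.span C" by (simp add: vec.span_diff)
    moreover have "u - v \<in> vec.span K" using uv(3) K(3) by (auto simp: lf.diff)
    ultimately show "u = v" using disj[of "u - v"] by simp
  qed
  have "range f = f ` vec.span B" using B(3) by auto
  also have "\<dots> = vec.span (f ` B)" by (simp add: lf.span_image)
  also have "\<dots> = vec.span (f ` C)"
  proof -
    have "f ` B \<subseteq> insert 0 (f ` C)" using K(1) C_def by auto
    then have "vec.span (f ` B) \<subseteq> vec.span (f ` C)"
      by (metis vec.span_insert_0 vec.span_mono)
    moreover have "vec.span (f ` C) \<subseteq> vec.span (f ` B)"
      by (rule vec.span_mono) (auto simp: C_def)
    ultimately show ?thesis by blast
  qed
  finally have "vec.dim (range f) = vec.dim (f ` C)" by simp
  also have "\<dots> = vec.dim C" by (rule vec.dim_image_eq[OF lf inj])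
  also have "\<dots> = card C" by (rule vec.dim_eq_card_independent[OF indC])
  finally show ?thesis using cardC cardB K(4) B(1) finB
    by (metis add.commute card_mono le_add_diff_inverse)
qed

lemma rank_skew:
  fixes A :: "'a::field^'n^'n"
  assumes skew: "\<And>i j. A $ i $ j = - A $ j $ i"
  shows "rank A = vec.dim (range ((*v) A))"
proof -
  have row: "row i A = A *v (- axis i 1)" for i
  proof -
    have "(A *v (- axis i 1)) $ j = A $ i $ j" for j
    proof -
      have "(A *v (- axis i 1)) $ j = (\<Sum>k\<in>UNIV. - (A $ j $ k * (if k = i then 1 else 0)))"
        by (simp add: matrix_vector_mult_def axis_def)
      also have "\<dots> = - A $ j $ i" by (simp add: sum_negf if_distrib[of "(*) _"] cong: if_cong)
      also have "\<dots> = A $ i $ j" using skew[of i j] by simp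
      finally show ?thesis .
    qed
    then show ?thesis by (simp add: vec_eq_iff row_def)
  qed
  have "rows A = (*v) A ` range (\<lambda>i. - axis i 1)"
    unfolding rows_def row by auto
  then have "vec.span (rows A) = (*v) A ` vec.span (range (\<lambda>i. - axis i 1))"
    by (simp add: vec.span_image)
  also have "vec.span (range (\<lambda>i::'n. - axis i (1::'a))) = UNIV"
  proof -
    have "(cart_basis :: ('a^'n) set) \<subseteq> vec.span (range (\<lambda>i::'n. - axis i (1::'a)))"
    proof (rule subsetI)
      fix x :: "'a^'n" assume "x \<in> cart_basis"
      then obtain i where x: "x = axis i 1" by (auto simp: cart_basis_def)
      have "- (- axis i (1::'a)) \<in> vec.span (range (\<lambda>i::'n. - axis i (1::'a)))"
        by (intro vec.span_neg vec.span_base) auto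
      then show "x \<in> vec.span (range (\<lambda>i::'n. - axis i (1::'a)))" by (simp add: x)
    qed
    then have "vec.span (cart_basis :: ('a^'n) set) \<subseteq> vec.span (range (\<lambda>i::'n. - axis i (1::'a)))"
      using vec.span_minimal by blast
    then show ?thesis using vec.span_Basis by auto
  qed
  finally have "vec.span (rows A) = range ((*v) A)" .
  then have "vec.dim (rows A) = vec.dim (range ((*v) A))"
    by (metis vec.dim_span)
  then show ?thesis by (simp add: row_rank_def_gen)
qed

locale tri =
  fixes s0 :: "'h::finite \<Rightarrow> 'h" and e :: "'h \<Rightarrow> 'e::finite"
  assumes bij_s0: "bij s0" and fib: "\<And>x. card (e -` {x}) = 2"
    and cube: "\<And>h. s0 (s0 (s0 h)) = h"
begin

abbreviation s1 where "s1 \<equiv> other_half e"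

lemma fiber: "\<exists>h'. h' \<noteq> h \<and> e h' = e h \<and> (\<forall>z. e z = e h \<longrightarrow> z = h \<or> z = h')"
proof -
  obtain a b where ab: "e -` {e h} = {a, b}" "a \<noteq> b"
    using fib[of "e h"] by (auto simp: card_2_iff)
  have "h \<in> {a, b}" using ab(1) by blast
  then show ?thesis using ab by (metis insertCI singletonD vimage_singleton_eq insertE)
qed

lemma s1_props: "s1 h \<noteq> h \<and> e (s1 h) = e h"
proof -
  obtain h' where h': "h' \<noteq> h" "e h' = e h" "\<forall>z. e z = e h \<longrightarrow> z = h \<or> z = h'"
    using fiber by blast
  have "\<exists>!x. x \<noteq> h \<and> e x = e h" using h' by blast
  from theI'[OF this] show ?thesis unfolding other_half_def by blast
qed

lemma s1_ne: "s1 h \<noteq> h" and s1_e[simp]: "e (s1 h) = e h"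
  using s1_props by auto

lemma s1_cases: "e z = e h \<Longrightarrow> z = h \<or> z = s1 h"
  using fiber[of h] s1_props[of h] by metis

lemma s1_s1[simp]: "s1 (s1 h) = h"
  using s1_cases[of h "s1 h"] s1_ne[of "s1 h"] by (metis s1_cases s1_e)

lemma fiber_set: "{z. e z = e h} = {h, s1 h}"
  using s1_cases by auto

lemma inv_s0: "inv s0 h = s0 (s0 h)"
  using bij_s0 cube by (metis bij_is_inj inv_f_eq)


abbreviation BB where "BB \<equiv> oriented_adjacency s0 e"

lemma B_entry: "BB $ i $ j = (\<Sum>h | e h = i. (if e (s0 h) = j then 1 else 0) - (if e (inv s0 h) = j then 1 else 0) :: rat)"
  unfolding oriented_adjacency_def of_int_sum by (simp, intro sum.cong refl, simp)

lemma B_mult: "(BB *v x) $ i = (\<Sum>h | e h = i. x $ e (s0 h) - x $ e (inv s0 h))"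
proof -
  have "(BB *v x) $ i = (\<Sum>j\<in>UNIV. BB $ i $ j * x $ j)"
    by (simp add: matrix_vector_mult_def)
  also have "\<dots> = (\<Sum>j\<in>UNIV. \<Sum>h | e h = i. ((if e (s0 h) = j then x $ j else 0) - (if e (inv s0 h) = j then x $ j else 0)))"
    unfolding B_entry sum_distrib_right by (intro sum.cong refl) (auto simp: algebra_simps)
  also have "\<dots> = (\<Sum>h | e h = i. \<Sum>j\<in>UNIV. ((if e (s0 h) = j then x $ j else 0) - (if e (inv s0 h) = j then x $ j else 0)))"
    by (rule sum.swap)
  also have "\<dots> = (\<Sum>h | e h = i. x $ e (s0 h) - x $ e (inv s0 h))"
    by (simp add: sum_subtractf)
  finally show ?thesis .
qed

definition yy where "yy x h = x $ e (s0 h) - x $ e (s0 (s0 h))"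

lemma B_mult2: "(BB *v x) $ e h = yy x h + yy x (s1 h)"
  unfolding B_mult fiber_set inv_s0 yy_def using s1_ne[of h] by simp

definition aa where "aa i j = (\<Sum>h\<in>UNIV. if e h = i \<and> e (s0 h) = j then 1 else (0::rat))"

lemma B_aa: "BB $ i $ j = aa i j - aa j i"
proof -
  have 1: "BB $ i $ j = (\<Sum>h\<in>UNIV. (if e h = i \<and> e (s0 h) = j then 1 else 0) - (if e h = i \<and> e (inv s0 h) = j then 1 else (0::rat)))"
    unfolding B_entry by (rule sum.mono_neutral_cong_left) auto
  have 2: "(\<Sum>h\<in>UNIV. (if e h = i \<and> e (inv s0 h) = j then 1 else (0::rat))) = aa j i"
    unfolding aa_def
    apply (rule sum.reindex_bij_witness[of _ s0 "inv s0"])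
    using bij_s0 by (auto simp: bij_is_inj inv_f_f bij_is_surj surj_f_inv_f)
  show ?thesis using 1 2 by (simp add: sum_subtractf aa_def)
qed

lemma B_skew: "BB $ i $ j = - BB $ j $ i"
  by (simp add: B_aa)


definition phi where "phi h = s0 (s1 h)"
definition VF :: "(rat^'h) set" where "VF = {k. \<forall>h. k $ phi h = k $ h}"
definition rep where "rep i = (SOME h. e h = i)"
definition CC :: "rat^'h \<Rightarrow> rat^'e" where "CC k = (\<chi> i. k $ rep i + k $ s1 (rep i))"

lemma rep_e: "e (rep i) = i"
proof -
  have "e -` {i} \<noteq> {}" using fib[of i] by (metis card.empty zero_neq_numeral)
  then show ?thesis unfolding rep_def by (auto intro: someI)
qed

lemma CC_e: "CC k $ e h = k $ h + k $ s1 h"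
proof -
  have "rep (e h) = h \<or> rep (e h) = s1 h" using s1_cases rep_e by metis
  then show ?thesis by (auto simp: CC_def)
qed

lemma VF_facts: assumes "k \<in> VF"
  shows "k $ s0 h = k $ s1 h" "k $ s0 (s0 h) = k $ s1 (s0 h)" "k $ s1 (s0 (s0 h)) = k $ h"
proof -
  have *: "\<And>z. k $ phi z = k $ z" using assms by (auto simp: VF_def)
  show "k $ s0 h = k $ s1 h" using *[of "s1 h"] by (simp add: phi_def)
  show "k $ s0 (s0 h) = k $ s1 (s0 h)" using *[of "s1 (s0 h)"] by (simp add: phi_def)
  show "k $ s1 (s0 (s0 h)) = k $ h" using *[of "s1 (s0 (s0 h))"] by (simp add: phi_def cube)
qed

lemma ker_sub: assumes "k \<in> VF" shows "BB *v CC k = 0"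
proof -
  have "(BB *v CC k) $ i = 0" for i
  proof -
    have i: "i = e (rep i)" by (simp add: rep_e)
    have y: "yy (CC k) h = k $ s1 h - k $ h" for h
      unfolding yy_def CC_e using VF_facts[OF assms, of h] by simp
    show ?thesis by (subst i, unfold B_mult2 y) simp
  qed
  then show ?thesis by (simp add: vec_eq_iff)
qed

lemma ker_sup: assumes "BB *v x = 0" shows "x \<in> CC ` VF"
proof -
  define k where "k = (\<chi> h. (x $ e h + x $ e (s0 (s0 h)) - x $ e (s0 h)) / 2)"
  have y0: "yy x h + yy x (s1 h) = 0" for h
    using B_mult2[of x h] assms by simp
  have "k \<in> VF"
    unfolding VF_def
  proof (intro CollectI allI)
    fix h
    show "k $ phi h = k $ h"
      using y0[of h] unfolding k_def phi_def yy_def by (simp add: cube field_simps)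
  qed
  moreover have "x = CC k"
  proof -
    have "x $ i = CC k $ i" for i
    proof -
      have i: "i = e (rep i)" by (simp add: rep_e)
      show ?thesis
        apply (subst (1 2) i)
        unfolding CC_e VF_facts(1)[OF \<open>k \<in> VF\<close>, symmetric]
        unfolding k_def by (simp add: cube field_simps)
    qed
    then show ?thesis by (simp add: vec_eq_iff)
  qed
  ultimately show ?thesis by blast
qed

lemma CC_linear: "Vector_Spaces.linear (*s) (*s) CC"
  by unfold_locales (auto simp: CC_def vec_eq_iff algebra_simps)

lemma VF_subspace: "vec.subspace VF"
  unfolding vec.subspace_def VF_def by auto

lemma CC_zero: assumes "k \<in> VF" "CC k = 0" shows "k = 0"
proof -
  have "k $ h = 0" for h
  proof -
    have z: "k $ z + k $ s0 z = 0" for z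
      using arg_cong[OF assms(2), of "\<lambda>v. v $ e z"] VF_facts(1)[OF assms(1), of z]
      by (simp add: CC_e)
    show ?thesis using z[of h] z[of "s0 h"] z[of "s0 (s0 h)"] by (simp add: cube)
  qed
  then show ?thesis by (simp add: vec_eq_iff)
qed

lemma CC_inj: "inj_on CC (vec.span VF)"
proof -
  interpret lf: Vector_Spaces.linear "(*s)" "(*s)" CC by (rule CC_linear)
  have sp: "vec.span VF = VF" using VF_subspace by simp
  show ?thesis unfolding sp inj_on_def
  proof (intro ballI impI)
    fix a b assume "a \<in> VF" "b \<in> VF" "CC a = CC b"
    then have "a - b \<in> VF" "CC (a - b) = 0" using VF_subspace
      by (auto simp: lf.diff vec.subspace_diff)
    then show "a = b" using CC_zero[of "a - b"] by simp
  qed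
qed

lemma ker_eq: "{x. BB *v x = 0} = CC ` VF"
  using ker_sub ker_sup by auto

lemma dim_ker: "vec.dim {x. BB *v x = 0} = vec.dim VF"
  unfolding ker_eq by (rule vec.dim_image_eq[OF CC_linear CC_inj])

end

context tri begin

lemma s1_bij: "bij s1"
proof -
  have "inj s1" by (rule injI) (metis s1_s1)
  moreover have "surj s1" by (rule surjI[of _ s1]) simp
  ultimately show ?thesis by (simp add: bij_def)
qed

lemma phi_comp: "phi = s0 \<circ> s1" by (rule ext) (simp add: phi_def)

lemma phi_bij: "bij phi" unfolding phi_comp by (rule bij_comp[OF s1_bij bij_s0])

definition ind :: "'h set \<Rightarrow> rat^'h" where "ind S = (\<chi> h. if h \<in> S then 1 else 0)"

abbreviation Orb where "Orb \<equiv> range (perm_orbit phi)"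

lemma orb_iff: "h \<in> perm_orbit phi x \<longleftrightarrow> perm_orbit phi h = perm_orbit phi x"
  using po_eq[OF phi_bij, of h x] po_self[of h phi] by auto

lemma ind_inj: "inj ind"
proof (rule injI)
  fix A B assume "ind A = ind B"
  then have "\<forall>h. (h \<in> A) = (h \<in> B)" by (auto simp: ind_def vec_eq_iff split: if_splits)
  then show "A = B" by auto
qed

lemma ind_comp: assumes "v \<in> ind ` Orb" shows "v $ a = (if v = ind (perm_orbit phi a) then 1 else 0)"
proof -
  obtain x where v: "v = ind (perm_orbit phi x)" using assms by auto
  have "v $ a = (if perm_orbit phi a = perm_orbit phi x then 1 else 0)"
    unfolding v ind_def using orb_iff[of a x] by simp
  also have "\<dots> = (if v = ind (perm_orbit phi a) then 1 else 0)"
    using ind_inj unfolding v by (auto simp: inj_eq)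
  finally show ?thesis .
qed

lemma VF_const: assumes "k \<in> VF" shows "k $ ((phi ^^ m) h) = k $ h"
proof (induction m)
  case 0 then show ?case by simp
next
  case (Suc m)
  have "k $ (phi ((phi ^^ m) h)) = k $ ((phi ^^ m) h)" using assms by (simp add: VF_def)
  then show ?case using Suc by simp
qed

lemma VF_orbit: assumes "k \<in> VF" "y \<in> perm_orbit phi x" shows "k $ y = k $ x"
proof -
  obtain m where "y = (phi ^^ m) x" using assms(2) unfolding perm_orbit_def by auto
  then show ?thesis using VF_const[OF assms(1)] by simp
qed

lemma sum_comp: assumes "a \<in> UNIV"
  shows "(\<Sum>v\<in>ind ` Orb. c v *s v) $ a = c (ind (perm_orbit phi a))"
proof -
  have "(\<Sum>v\<in>ind ` Orb. c v *s v) $ a = (\<Sum>v\<in>ind ` Orb. c v * v $ a)"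
    by (simp add: sum_component)
  also have "\<dots> = (\<Sum>v\<in>ind ` Orb. if v = ind (perm_orbit phi a) then c v else 0)"
    by (rule sum.cong[OF refl]) (simp add: ind_comp)
  also have "\<dots> = c (ind (perm_orbit phi a))"
    by (simp add: sum.delta')
  finally show ?thesis .
qed

lemma I_sub: "ind ` Orb \<subseteq> VF"
proof
  fix v assume "v \<in> ind ` Orb"
  then obtain x where v: "v = ind (perm_orbit phi x)" by auto
  have "v $ phi h = v $ h" for h
  proof -
    have "perm_orbit phi (phi h) = perm_orbit phi h"
      using po_eq[OF phi_bij po_step[of phi h]] .
    then show ?thesis unfolding v ind_def using orb_iff[of h x] orb_iff[of "phi h" x] by simp
  qed
  then show "v \<in> VF" by (simp add: VF_def)
qed

lemma I_indep: "vec.independent (ind ` Orb)"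
  unfolding vec.independent_explicit
proof (intro conjI allI impI ballI)
  show "finite (ind ` Orb)" by simp
  fix c v assume s: "(\<Sum>v\<in>ind ` Orb. c v *s v) = 0" and v: "v \<in> ind ` Orb"
  then obtain x where vx: "v = ind (perm_orbit phi x)" by auto
  have "(\<Sum>v\<in>ind ` Orb. c v *s v) $ x = 0" using s by simp
  then show "c v = 0" using sum_comp[of x c] vx by simp
qed

lemma VF_span: "VF \<subseteq> vec.span (ind ` Orb)"
proof
  fix k assume k: "k \<in> VF"
  define c where "c v = k $ (SOME h. v $ h = 1)" for v :: "rat^'h"
  have "k = (\<Sum>v\<in>ind ` Orb. c v *s v)"
  proof (subst vec_eq_iff, intro allI)
    fix a
    have ex: "ind (perm_orbit phi a) $ a = 1" by (simp add: ind_def po_self)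
    define h' where "h' = (SOME h. ind (perm_orbit phi a) $ h = 1)"
    have "ind (perm_orbit phi a) $ h' = 1" unfolding h'_def by (rule someI[of _ a]) (rule ex)
    then have "h' \<in> perm_orbit phi a" by (simp add: ind_def split: if_splits)
    then have "k $ h' = k $ a" by (rule VF_orbit[OF k])
    moreover have "(\<Sum>v\<in>ind ` Orb. c v *s v) $ a = c (ind (perm_orbit phi a))"
      by (rule sum_comp) simp
    ultimately show "k $ a = (\<Sum>v\<in>ind ` Orb. c v *s v) $ a"
      unfolding c_def h'_def by simp
  qed
  also have "\<dots> \<in> vec.span (ind ` Orb)"
    by (intro vec.span_sum vec.span_scale vec.span_base)
  finally show "k \<in> vec.span (ind ` Orb)" .
qed

lemma dim_VF: "vec.dim VF = card Orb"
proof -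
  have "card (ind ` Orb) = vec.dim VF"
    by (rule vec.basis_card_eq_dim[OF I_sub VF_span I_indep])
  moreover have "card (ind ` Orb) = card Orb"
    by (rule card_image) (rule inj_on_subset[OF ind_inj], simp)
  ultimately show ?thesis by simp
qed

lemma rank_BB: "int (rank BB) = int CARD('e) - int (card Orb)"
proof -
  have "rank BB = vec.dim (range ((*v) BB))"
    by (rule rank_skew) (rule B_skew)
  moreover have "vec.dim (range ((*v) BB)) + vec.dim {x. BB *v x = 0} = CARD('e)"
    by (rule rank_nullity_vec) simp
  ultimately show ?thesis using dim_ker dim_VF by simp
qed

end

theorem lemma4p3:
  fixes s0 :: "'h::finite \<Rightarrow> 'h" and e :: "'h \<Rightarrow> 'e::finite" and g n :: nat
  assumes "trivalent_ribbon_graph s0 e"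
    and "ribbon_type s0 e g n"
    and "n \<ge> 1"
    and "2 - 2 * int g - int n < 0"
  shows "int (rank (oriented_adjacency s0 e)) = 6 * int g - 6 + 2 * int n"
proof -
  have rg: "ribbon_graph s0 e" and c3: "\<And>h. card (perm_orbit s0 h) = 3"
    using assms(1) by (auto simp: trivalent_ribbon_graph_def)
  have bij: "bij s0" and fib: "\<And>x. card (e -` {x}) = 2"
    using rg by (auto simp: ribbon_graph_def)
  have cube: "s0 (s0 (s0 h)) = h" for h by (rule cube_of_card3[OF bij c3])
  interpret tri s0 e
    by unfold_locales (simp_all add: bij fib cube)
  have F: "card (range (perm_orbit phi)) = n"
    using assms(2) by (simp add: ribbon_type_def num_faces_def num_orbits_def phi_comp)
  have Eul: "int (num_vertices s0) - int CARD('e) + int n = 2 - 2 * int g"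
    using assms(2) by (simp add: ribbon_type_def)
  have V: "3 * num_vertices s0 = CARD('h)"
    using po_partition[OF bij c3] by (simp add: num_vertices_def num_orbits_def)
  have U: "(UNIV :: 'h set) = (\<Union>x\<in>(UNIV :: 'e set). e -` {x})" by auto
  have "card (UNIV :: 'h set) = (\<Sum>x\<in>(UNIV :: 'e set). card (e -` {x}))"
    unfolding U by (rule card_UN_disjoint) auto
  also have "\<dots> = 2 * CARD('e)" by (simp add: fib)
  finally have H: "CARD('h) = 2 * CARD('e)" .
  have R: "int (rank BB) = int CARD('e) - int n" using rank_BB F by simp
  have "3 * int (num_vertices s0) = 2 * int CARD('e)" using V H by linarith
  then show ?thesis using R Eul by linarith
qed

end
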